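(* Let $p_1=(\alpha,r,\delta)$ be a condition, $y\in\ell^2$ be nicely hypercyclic, and $U_{q,\varepsilon}$ be a basic neighborhood ($q\in\mathbb Q^{<\omega}$, $\varepsilon$ a positive rational). Then there is a condition $p_2=(\beta,s,\eta)$ such that $p_2<p_1$ and, for some $k\le|\beta|$, $B^k_{\beta^+}$ maps $y$ nicely into $U_{q,\varepsilon}$.
   Context: $\omega=\{0,1,2,\dots\}$; $\ell^2$ is the Hilbert space of square-summable real sequences indexed by $\omega$. For nonempty $q\in\mathbb Q^{<\omega}$ and rational $\varepsilon>0$, $U_{q,\varepsilon}=\{x\in\ell^2:\lVert (x\upharpoonright|q|)-q\rVert_\infty<\varepsilon|q|^{-1/2}\text{ and }\lVert x\upharpoonright[|q|,\infty)\rVert_2<\varepsilon\}$; for $q$ empty, $U_{q,\varepsilon}=\{x:\lVert x\rVert_2<\varepsilon\}$. For $w\in\{1,2\}^\omega$, $B_w(x)(i)=w(i)x(i+1)$. A function $w$ on $\omega$ is $n$-nice at $k$ if $w(i)=w(k+i)$ for all $i<n$. $B_w^k$ maps $y$ nicely into $U_{q,\varepsilon}$ if $B_w^k(y)\in U_{q,\varepsilon}$, $w$ is $|q|$-nice at $k$, and $\lVert y\upharpoonright[k+|q|,\infty)\rVert_2<\varepsilon 2^{-k}$. $y$ is nicely hypercyclic if there is $w\in\{1,2\}^\omega$ such that for every $U_{q,\varepsilon}$ some $B_w^k$ maps $y$ nicely into $U_{q,\varepsilon}$. For $\alpha\in\{1,2\}^{<\omega}$, $\alpha^+$ is $\alpha$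 followed by all $2$'s. A condition is a triple $(\alpha,r,\delta)\in\{1,2\}^{<\omega}\times\mathbb Q^{<\omega}\times(\mathbb Q\cap(0,1))$ with $|\alpha|\ge|r|$ and $\delta<2^{-|\alpha|}$. For conditions, $(\alpha_2,r_2,\delta_2)<(\alpha_1,r_1,\delta_1)$ means: $\alpha_1$ is an initial segment of $\alpha_2$; $\overline{U_{r_2,\delta_2}}\subseteq U_{r_1,\delta_1}$; and for all $k\in[|\alpha_1|,|\alpha_2|)$, $B^k_{\alpha_2^+}[U_{r_2,\delta_2}]\subseteq\{z\in\ell^2:\lVert z\rVert_2<1\}$. *)

theory Defs
  imports "HOL-Analysis.Analysis"
begin

text \<open>Weights w in {1,2}^omega are functions nat => nat with values in {1,2};
  finite sequences alpha in {1,2}^{<omega} are nat lists with entries in {1,2};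
  q in Q^{<omega} is a rat list.\<close>

definition l2 :: "(nat \<Rightarrow> real) set" where
  "l2 = {x. summable (\<lambda>i. (x i)\<^sup>2)}"

definition l2norm :: "(nat \<Rightarrow> real) \<Rightarrow> real" where
  "l2norm x = sqrt (\<Sum>i. (x i)\<^sup>2)"

definition tailnorm :: "(nat \<Rightarrow> real) \<Rightarrow> nat \<Rightarrow> real" where
  "tailnorm x n = sqrt (\<Sum>i. (x (i + n))\<^sup>2)"

definition basicU :: "rat list \<Rightarrow> rat \<Rightarrow> (nat \<Rightarrow> real) set" where
  "basicU q \<epsilon> =
     (if q = [] then {x \<in> l2. l2norm x < real_of_rat \<epsilon>}
      else {x \<in> l2. (\<forall>i < length q. \<bar>x i - real_of_rat (q ! i)\<bar>
                              < real_of_rat \<epsilon> / sqrt (real (length q)))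
                    \<and> tailnorm x (length q) < real_of_rat \<epsilon>})"

definition l2closure :: "(nat \<Rightarrow> real) set \<Rightarrow> (nat \<Rightarrow> real) set" where
  "l2closure U = {x \<in> l2. \<forall>e>0. \<exists>z\<in>U. l2norm (\<lambda>i. x i - z i) < e}"

definition weights :: "(nat \<Rightarrow> nat) set" where
  "weights = {w. \<forall>i. w i \<in> {1, 2}}"

definition Bw :: "(nat \<Rightarrow> nat) \<Rightarrow> (nat \<Rightarrow> real) \<Rightarrow> (nat \<Rightarrow> real)" where
  "Bw w x = (\<lambda>i. real (w i) * x (Suc i))"

definition nice_at :: "(nat \<Rightarrow> nat) \<Rightarrow> nat \<Rightarrow> nat \<Rightarrow> bool" where
  "nice_at w n k \<longleftrightarrow> (\<forall>i<n. w i = w (k + i))"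

definition maps_nicely ::
  "(nat \<Rightarrow> nat) \<Rightarrow> nat \<Rightarrow> (nat \<Rightarrow> real) \<Rightarrow> rat list \<Rightarrow> rat \<Rightarrow> bool" where
  "maps_nicely w k y q \<epsilon> \<longleftrightarrow>
     (Bw w ^^ k) y \<in> basicU q \<epsilon> \<and> nice_at w (length q) k \<and>
     tailnorm y (k + length q) < real_of_rat \<epsilon> * 2 powi (- int k)"

definition nicely_hypercyclic :: "(nat \<Rightarrow> real) \<Rightarrow> bool" where
  "nicely_hypercyclic y \<longleftrightarrow>
     (\<exists>w\<in>weights. \<forall>q \<epsilon>. \<epsilon> > 0 \<longrightarrow> (\<exists>k. maps_nicely w k y q \<epsilon>))"

definition plus_ext :: "nat list \<Rightarrow> nat \<Rightarrow> nat" where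
  "plus_ext \<alpha> = (\<lambda>i. if i < length \<alpha> then \<alpha> ! i else 2)"

definition is_condition :: "nat list \<Rightarrow> rat list \<Rightarrow> rat \<Rightarrow> bool" where
  "is_condition \<alpha> r \<delta> \<longleftrightarrow>
     set \<alpha> \<subseteq> {1, 2} \<and> length \<alpha> \<ge> length r \<and> 0 < \<delta> \<and> \<delta> < 1 \<and>
     \<delta> < 2 powi (- int (length \<alpha>))"

definition cond_less ::
  "nat list \<Rightarrow> rat list \<Rightarrow> rat \<Rightarrow> nat list \<Rightarrow> rat list \<Rightarrow> rat \<Rightarrow> bool" where
  "cond_less \<alpha>2 r2 \<delta>2 \<alpha>1 r1 \<delta>1 \<longleftrightarrow>
     take (length \<alpha>1) \<alpha>2 = \<alpha>1 \<and> length \<alpha>1 \<le> length \<alpha>2 \<and>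
     l2closure (basicU r2 \<delta>2) \<subseteq> basicU r1 \<delta>1 \<and>
     (\<forall>k. length \<alpha>1 \<le> k \<and> k < length \<alpha>2 \<longrightarrow>
        (Bw (plus_ext \<alpha>2) ^^ k) ` basicU r2 \<delta>2 \<subseteq> {z \<in> l2. l2norm z < 1})"

end

theory Submission
  imports Defs
begin

lemma Bw_pow: "(Bw w ^^ k) x i = real (\<Prod>j<k. w (i+j)) * x (i+k)"
proof (induction k arbitrary: i)
  case 0 then show ?case by simp
next
  case (Suc k)
  have "(Bw w ^^ Suc k) x i = real (w i) * (Bw w ^^ k) x (Suc i)"
    by (simp add: Bw_def)
  also have "\<dots> = real (w i) * real (\<Prod>j<k. w (Suc i+j)) * x (Suc i+k)"
    using Suc by simp
  also have "(\<Prod>j<Suc k. w (i+j)) = w i * (\<Prod>j<k. w (Suc i+j))"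
    by (subst prod.lessThan_Suc_shift) simp
  ultimately show ?case by simp
qed

lemma prod_nice:
  assumes pos: "\<And>j. 0 < w j" and nice: "nice_at w m k" and "i \<le> m"
  shows "(\<Prod>j<k. w (i+j)) = (\<Prod>j<k. (w j::nat))"
  using \<open>i \<le> m\<close>
proof (induction i)
  case 0 then show ?case by simp
next
  case (Suc i)
  then have im: "i < m" by simp
  have "(\<Prod>j<Suc k. w (i+j)) = w i * (\<Prod>j<k. w (Suc i+j))"
    by (subst prod.lessThan_Suc_shift) simp
  moreover have "(\<Prod>j<Suc k. w (i+j)) = (\<Prod>j<k. w (i+j)) * w (i+k)"
    by simp
  moreover have "w (i+k) = w i" using nice im unfolding nice_at_def by (simp add: add.commute)
  ultimately have "w i * (\<Prod>j<k. w (Suc i+j)) = w i * (\<Prod>j<k. w j)"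
    using Suc.IH[OF less_imp_le[OF im]] by (metis mult.commute)
  then show ?case using pos[of i] by (metis mult_cancel_left less_not_refl)
qed

lemma prod_bound:
  assumes "\<And>j. w j \<le> (2::nat)"
  shows "real (\<Prod>j<k. w (i+j)) \<le> 2^k"
proof -
  have "(\<Prod>j<k. w (i+j)) \<le> 2^k"
    by (rule prod_le_power) (use assms in auto)
  then show ?thesis by (metis of_nat_le_iff of_nat_numeral of_nat_power)
qed

lemma l2norm_tail: "l2norm x = tailnorm x 0"
  by (simp add: l2norm_def tailnorm_def)

lemma tail_bound:
  assumes y: "y \<in> l2" and C: "C \<ge> 0" and b: "\<And>i. \<bar>v (i+j)\<bar> \<le> C * \<bar>y (i+j')\<bar>"
  shows "summable (\<lambda>i. (v (i+j))\<^sup>2)" "tailnorm v j \<le> C * tailnorm y j'"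
proof -
  have sy: "summable (\<lambda>i. (y (i+j'))\<^sup>2)" using y unfolding l2_def
    by (simp add: summable_iff_shift[where f="\<lambda>i. (y i)\<^sup>2"])
  then have sy2: "summable (\<lambda>i. C\<^sup>2 * (y (i+j'))\<^sup>2)" by (rule summable_mult)
  have le: "(v (i+j))\<^sup>2 \<le> C\<^sup>2 * (y (i+j'))\<^sup>2" for i
  proof -
    have "\<bar>v (i+j)\<bar>\<^sup>2 \<le> (C * \<bar>y (i+j')\<bar>)\<^sup>2"
      using b[of i] by (intro power_mono) auto
    then show ?thesis by (simp add: power_mult_distrib)
  qed
  show sv: "summable (\<lambda>i. (v (i+j))\<^sup>2)"
    by (rule summable_comparison_test[OF _ sy2]) (use le in auto)
  have "(\<Sum>i. (v (i+j))\<^sup>2) \<le> (\<Sum>i. C\<^sup>2 * (y (i+j'))\<^sup>2)"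
    by (rule suminf_le[OF le sv sy2])
  also have "\<dots> = C\<^sup>2 * (\<Sum>i. (y (i+j'))\<^sup>2)" by (rule suminf_mult[OF sy])
  finally have "sqrt (\<Sum>i. (v (i+j))\<^sup>2) \<le> sqrt (C\<^sup>2 * (\<Sum>i. (y (i+j'))\<^sup>2))"
    by simp
  also have "\<dots> = C * sqrt (\<Sum>i. (y (i+j'))\<^sup>2)" using C by (simp add: real_sqrt_mult)
  finally show "tailnorm v j \<le> C * tailnorm y j'" by (simp add: tailnorm_def)
qed

lemma tail_mono:
  assumes y: "y \<in> l2" and "j \<le> j'"
  shows "tailnorm y j' \<le> tailnorm y j"
proof -
  obtain d where d: "j' = j + d" using assms(2) le_Suc_ex by blast
  have sy: "summable (\<lambda>i. (y (i+j))\<^sup>2)" using y unfolding l2_def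
    by (simp add: summable_iff_shift[where f="\<lambda>i. (y i)\<^sup>2"])
  have "(\<Sum>i. (y (i+j))\<^sup>2) = (\<Sum>i. (y (i+d+j))\<^sup>2) + (\<Sum>i<d. (y (i+j))\<^sup>2)"
    by (rule suminf_split_initial_segment[OF sy])
  moreover have "(\<Sum>i<d. (y (i+j))\<^sup>2) \<ge> 0" by (simp add: sum_nonneg)
  moreover have "(\<lambda>i. (y (i+d+j))\<^sup>2) = (\<lambda>i. (y (i+j'))\<^sup>2)" using d by (simp add: ac_simps)
  ultimately have "(\<Sum>i. (y (i+j'))\<^sup>2) \<le> (\<Sum>i. (y (i+j))\<^sup>2)" by simp
  then show ?thesis unfolding tailnorm_def by simp
qed

lemma Bw_l2:
  assumes "\<And>j. w j \<le> (2::nat)" "x \<in> l2"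
  shows "(Bw w ^^ k) x \<in> l2" "tailnorm ((Bw w ^^ k) x) j \<le> 2^k * tailnorm x (j+k)"
proof -
  have b: "\<bar>(Bw w ^^ k) x (i+j)\<bar> \<le> 2^k * \<bar>x (i+(j+k))\<bar>" for i j
  proof -
    have "\<bar>(Bw w ^^ k) x (i+j)\<bar> = real (\<Prod>ja<k. w (i+j+ja)) * \<bar>x (i+j+k)\<bar>"
      unfolding Bw_pow abs_mult by (simp add: abs_prod)
    also have "\<dots> \<le> 2^k * \<bar>x (i+j+k)\<bar>"
      by (rule mult_right_mono[OF prod_bound]) (use assms in auto)
    finally show ?thesis by (simp add: ac_simps)
  qed
  note tb = tail_bound[OF assms(2) _ b]
  show "tailnorm ((Bw w ^^ k) x) j \<le> 2^k * tailnorm x (j+k)" using tb by simp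
  have "summable (\<lambda>i. ((Bw w ^^ k) x (i+0))\<^sup>2)"
    using tail_bound[OF assms(2) _ b[of _ 0]] by simp
  then show "(Bw w ^^ k) x \<in> l2" unfolding l2_def by simp
qed

lemma basicU_alt: "basicU q \<epsilon> = {x \<in> l2. (\<forall>i<length q. \<bar>x i - real_of_rat (q ! i)\<bar>
      < real_of_rat \<epsilon> / sqrt (real (length q))) \<and> tailnorm x (length q) < real_of_rat \<epsilon>}"
  by (cases "q = []") (auto simp: basicU_def l2norm_tail)


lemma l2_shift: "y \<in> l2 \<Longrightarrow> summable (\<lambda>i. (y (i+j))\<^sup>2)"
  unfolding l2_def by (simp add: summable_iff_shift[where f="\<lambda>i. (y i)\<^sup>2"])

lemma tailnorm_nonneg: "y \<in> l2 \<Longrightarrow> tailnorm y j \<ge> 0"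
  unfolding tailnorm_def by (intro real_sqrt_ge_zero suminf_nonneg l2_shift) auto

lemma tail_pos:
  assumes y: "y \<in> l2" and hc: "nicely_hypercyclic y"
  shows "tailnorm y n > 0"
proof (rule ccontr)
  assume "\<not> tailnorm y n > 0"
  then have "tailnorm y n = 0" using tailnorm_nonneg[OF y, of n] by simp
  then have "(\<Sum>i. (y (i+n))\<^sup>2) = 0" unfolding tailnorm_def by simp
  then have "\<forall>i. (y (i+n))\<^sup>2 = 0" using suminf_eq_zero_iff[OF l2_shift[OF y]] by simp
  then have z: "y j = 0" if "j \<ge> n" for j using that
    by (metis le_add_diff_inverse2 power_eq_0_iff)
  obtain w where w: "w \<in> weights" and H: "\<forall>q \<epsilon>. \<epsilon> > 0 \<longrightarrow> (\<exists>k. maps_nicely w k y q \<epsilon>)"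
    using hc unfolding nicely_hypercyclic_def by blast
  have w2: "w j \<le> 2" for j
  proof -
    have "w j \<in> {1,2}" using w unfolding weights_def by blast
    then show ?thesis by auto
  qed
  define T where "T = (\<Sum>j<n. 2^j * \<bar>y j\<bar>)"
  define t :: nat where "t = nat \<lceil>T\<rceil> + 1"
  have tT: "real t \<ge> T + 1" unfolding t_def by linarith
  obtain k where "maps_nicely w k y [of_nat t] (1/2)" using H by force
  then have "(Bw w ^^ k) y \<in> basicU [of_nat t] (1/2)" unfolding maps_nicely_def by simp
  then have "\<bar>(Bw w ^^ k) y 0 - real t\<bar> < 1/2"
    unfolding basicU_alt by (simp add: of_rat_divide)
  moreover have "(Bw w ^^ k) y 0 = real (\<Prod>j<k. w j) * y k" by (simp add: Bw_pow)
  moreover have "\<bar>real (\<Prod>j<k. w j) * y k\<bar> \<le> T"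
  proof (cases "k < n")
    case True
    have "\<bar>real (\<Prod>j<k. w j) * y k\<bar> = real (\<Prod>j<k. w (0+j)) * \<bar>y k\<bar>"
      by (simp add: abs_mult abs_prod)
    also have "\<dots> \<le> 2^k * \<bar>y k\<bar>" by (rule mult_right_mono[OF prod_bound]) (use w2 in auto)
    also have "\<dots> \<le> T" unfolding T_def
      by (rule member_le_sum[where f="\<lambda>j. 2^j * \<bar>y j\<bar>"]) (use True in auto)
    finally show ?thesis .
  next
    case False
    then have "y k = 0" using z by simp
    moreover have "T \<ge> 0" unfolding T_def by (intro sum_nonneg) auto
    ultimately show ?thesis by simp
  qed
  ultimately show False using tT by linarith
qed

lemma l2_diff:
  assumes "x \<in> l2" "z \<in> l2" shows "(\<lambda>i. x i - z i) \<in> l2"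
proof -
  have s: "summable (\<lambda>i. 2 * (x i)\<^sup>2 + 2 * (z i)\<^sup>2)"
    using assms unfolding l2_def by (intro summable_add summable_mult) auto
  have "(x i - z i)\<^sup>2 \<le> 2 * (x i)\<^sup>2 + 2 * (z i)\<^sup>2" for i
    using zero_le_power2[of "x i + z i"] unfolding power2_eq_square by (simp add: algebra_simps)
  then show ?thesis unfolding l2_def
    by (intro CollectI summable_comparison_test[OF _ s]) auto
qed

lemma coord_le_norm:
  assumes "u \<in> l2" shows "\<bar>u i\<bar> \<le> l2norm u"
proof -
  have "(u i)\<^sup>2 \<le> (\<Sum>j. (u j)\<^sup>2)"
    using sum_le_suminf[of "\<lambda>j. (u j)\<^sup>2" "{i}"] assms unfolding l2_def by auto
  then have "sqrt ((u i)\<^sup>2) \<le> sqrt (\<Sum>j. (u j)\<^sup>2)" by (rule real_sqrt_le_mono)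
  then show ?thesis unfolding l2norm_def by simp
qed

lemma closure_sub:
  assumes eta: "0 < \<eta>" "\<eta> \<le> \<delta> / 2"
  shows "l2closure (basicU r \<eta>) \<subseteq> basicU r \<delta>"
proof
  fix x assume "x \<in> l2closure (basicU r \<eta>)"
  then have x: "x \<in> l2" and cl: "\<And>e. e > 0 \<Longrightarrow> \<exists>z\<in>basicU r \<eta>. l2norm (\<lambda>i. x i - z i) < e"
    unfolding l2closure_def by auto
  define L where "L = length r"
  define D where "D = real_of_rat \<delta>"
  define E where "E = real_of_rat \<eta>"
  define s where "s = sqrt (real L)"
  have E0: "E > 0" using eta unfolding E_def by simp
  have "real_of_rat \<eta> \<le> real_of_rat (\<delta>/2)" using eta(2) by (simp only: of_rat_less_eq)
  then have ED: "E \<le> D/2" unfolding E_def D_def by (simp add: of_rat_divide)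
  then have D0: "D > 0" using E0 by simp
  have s0: "s \<ge> 0" unfolding s_def by simp
  define e where "e = D / (4 * (s + 1))"
  have e0: "e > 0" unfolding e_def using D0 s0 by simp
  obtain z where z: "z \<in> basicU r \<eta>" and xz: "l2norm (\<lambda>i. x i - z i) < e" using cl[OF e0] by blast
  have zl2: "z \<in> l2" and zc: "\<And>i. i < L \<Longrightarrow> \<bar>z i - real_of_rat (r ! i)\<bar> < E / s"
    and zt: "tailnorm z L < E"
    using z unfolding basicU_alt L_def E_def s_def by auto
  define u where "u = (\<lambda>i. x i - z i)"
  have ul2: "u \<in> l2" unfolding u_def by (rule l2_diff[OF x zl2])
  have un: "l2norm u < e" using xz unfolding u_def .
  have coord: "\<bar>x i - real_of_rat (r ! i)\<bar> < D / s" if i: "i < L" for i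
  proof -
    have sp: "s > 0" unfolding s_def using i by simp
    have "\<bar>u i\<bar> \<le> l2norm u" by (rule coord_le_norm[OF ul2])
    then have ui: "\<bar>u i\<bar> < e" using un by simp
    have "e * s < D / 4" unfolding e_def using D0 sp by (simp add: field_simps)
    then have "e < D / (4 * s)" using sp by (simp add: field_simps)
    moreover have "E / s \<le> D / (2 * s)" using ED sp by (simp add: field_simps)
    moreover have "D / (4 * s) + D / (2 * s) < D / s" using D0 sp by (simp add: field_simps)
    moreover have "\<bar>x i - real_of_rat (r ! i)\<bar> \<le> \<bar>u i\<bar> + \<bar>z i - real_of_rat (r ! i)\<bar>"
      unfolding u_def by linarith
    ultimately show ?thesis using ui zc[OF i] by linarith
  qed
  have tail: "tailnorm x L < D"
  proof -
    have sz: "summable (\<lambda>i. (z (i+L))\<^sup>2)" by (rule l2_shift[OF zl2])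
    have su: "summable (\<lambda>i. (u (i+L))\<^sup>2)" by (rule l2_shift[OF ul2])
    have sx: "summable (\<lambda>i. (x (i+L))\<^sup>2)" by (rule l2_shift[OF x])
    have le: "(x (i+L))\<^sup>2 \<le> 2 * (z (i+L))\<^sup>2 + 2 * (u (i+L))\<^sup>2" for i
      using zero_le_power2[of "z (i+L) - u (i+L)"] unfolding u_def power2_eq_square
      by (simp add: algebra_simps)
    have "(\<Sum>i. (x (i+L))\<^sup>2) \<le> (\<Sum>i. 2 * (z (i+L))\<^sup>2 + 2 * (u (i+L))\<^sup>2)"
      by (rule suminf_le[OF le sx]) (intro summable_add summable_mult sz su)
    also have "\<dots> = 2 * (\<Sum>i. (z (i+L))\<^sup>2) + 2 * (\<Sum>i. (u (i+L))\<^sup>2)"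
      using sz su by (simp add: suminf_add[symmetric] suminf_mult)
    finally have A: "(\<Sum>i. (x (i+L))\<^sup>2) \<le> 2 * (\<Sum>i. (z (i+L))\<^sup>2) + 2 * (\<Sum>i. (u (i+L))\<^sup>2)" .
    have Z0: "(\<Sum>i. (z (i+L))\<^sup>2) \<ge> 0" by (intro suminf_nonneg sz) auto
    have U0: "(\<Sum>i. (u (i+L))\<^sup>2) \<ge> 0" by (intro suminf_nonneg su) auto
    have "sqrt (\<Sum>i. (z (i+L))\<^sup>2) < E" using zt unfolding tailnorm_def .
    then have Z: "(\<Sum>i. (z (i+L))\<^sup>2) < E\<^sup>2" using Z0 E0
      by (metis real_sqrt_less_iff real_sqrt_abs abs_of_pos)
    have "tailnorm u L \<le> tailnorm u 0" by (rule tail_mono[OF ul2]) simp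
    then have "sqrt (\<Sum>i. (u (i+L))\<^sup>2) < e" using un unfolding tailnorm_def l2norm_tail by simp (meson le_less_trans real_sqrt_le_mono)
    then have U: "(\<Sum>i. (u (i+L))\<^sup>2) < e\<^sup>2" using U0 e0
      by (metis real_sqrt_less_iff real_sqrt_abs abs_of_pos)
    have "e \<le> D / 4" unfolding e_def using D0 s0 by (simp add: field_simps)
    then have "e\<^sup>2 \<le> (D/4)\<^sup>2" using e0 by (intro power_mono) auto
    moreover have "E\<^sup>2 \<le> (D/2)\<^sup>2" using ED E0 by (intro power_mono) auto
    ultimately have "(\<Sum>i. (x (i+L))\<^sup>2) < D\<^sup>2"
      using A Z U mult_pos_pos[OF D0 D0] by (simp add: power2_eq_square)
    then have "sqrt (\<Sum>i. (x (i+L))\<^sup>2) < sqrt (D\<^sup>2)" by (rule real_sqrt_less_mono)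
    then show ?thesis unfolding tailnorm_def using D0 by simp
  qed
  show "x \<in> basicU r \<delta>" unfolding basicU_alt using x coord tail
    unfolding L_def D_def s_def by auto
qed

lemma ball_map:
  assumes w2: "\<And>j. w j \<le> (2::nat)" and x: "x \<in> basicU r \<eta>" and k: "length r \<le> k"
    and small: "2^k * real_of_rat \<eta> \<le> 1"
  shows "(Bw w ^^ k) x \<in> {z \<in> l2. l2norm z < 1}"
proof -
  have xl2: "x \<in> l2" and xt: "tailnorm x (length r) < real_of_rat \<eta>"
    using x unfolding basicU_alt by auto
  have "l2norm ((Bw w ^^ k) x) \<le> 2^k * tailnorm x (0+k)"
    unfolding l2norm_tail by (rule Bw_l2(2)[OF w2 xl2])
  also have "\<dots> \<le> 2^k * tailnorm x (length r)"
    using tail_mono[OF xl2 k] by simp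
  also have "\<dots> < 2^k * real_of_rat \<eta>" using xt by simp
  finally show ?thesis using small Bw_l2(1)[OF w2 xl2] by simp
qed

definition cnt :: "(nat \<Rightarrow> nat) \<Rightarrow> nat \<Rightarrow> nat \<Rightarrow> nat" where
  "cnt w v k = (\<Sum>j<k. if w j = v then 1 else 0)"

lemma prod_cnt:
  assumes "\<And>j. w j \<in> {1,2}"
  shows "(\<Prod>j<k. w j) = 2 ^ cnt w 2 k"
proof (induction k)
  case 0 then show ?case by (simp add: cnt_def)
next
  case (Suc k)
  have "w k = 1 \<or> w k = 2" using assms[of k] by auto
  then show ?case using Suc by (auto simp: cnt_def)
qed

lemma cnt12:
  assumes "\<And>j. w j \<in> {1,2}"
  shows "cnt w 1 k + cnt w 2 k = k"
proof (induction k)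
  case 0 then show ?case by (simp add: cnt_def)
next
  case (Suc k)
  have "w k = 1 \<or> w k = 2" using assms[of k] by auto
  then show ?case using Suc by (auto simp: cnt_def)
qed

lemma cnt_mono: "k \<le> k' \<Longrightarrow> cnt w v k \<le> cnt w v k'"
  unfolding cnt_def by (rule sum_mono2) auto

lemma exists_nK:
  assumes "\<And>j. w j \<in> {1,2}"
  shows "\<exists>n K. \<forall>k\<ge>K. a \<le> k \<longrightarrow> n \<le> cnt w 1 k \<and> cnt w 1 k + a \<le> k + n"
proof (cases "\<exists>K. cnt w 1 K \<ge> a")
  case True
  then obtain K where K: "cnt w 1 K \<ge> a" by blast
  have "a \<le> cnt w 1 k \<and> cnt w 1 k + a \<le> k + a" if "k \<ge> K" for k
  proof -
    have "cnt w 1 k + cnt w 2 k = k" by (rule cnt12) (rule assms)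
    then show ?thesis using cnt_mono[OF that, where w=w and v=1] K by simp
  qed
  then show ?thesis by blast
next
  case False
  then have lt: "cnt w 1 k < a" for k by (simp add: not_le)
  have fin: "finite (range (cnt w 1))"
    by (rule finite_subset[of _ "{..<a}"]) (use lt in auto)
  define M where "M = Max (range (cnt w 1))"
  have "M \<in> range (cnt w 1)" unfolding M_def by (rule Max_in[OF fin]) simp
  then obtain K where K: "cnt w 1 K = M" by auto
  have "M \<le> cnt w 1 k \<and> cnt w 1 k + a \<le> k + M" if "k \<ge> K" "a \<le> k" for k
  proof -
    have "cnt w 1 k \<le> M" unfolding M_def by (rule Max_ge[OF fin]) simp
    moreover have "M \<le> cnt w 1 k" using cnt_mono[OF that(1), where w=w and v=1] K by simp
    ultimately show ?thesis using that by simp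
  qed
  then show ?thesis by blast
qed

lemma prod_list_nth: "(\<Prod>j<length l. l ! j) = prod_list (l :: nat list)"
proof (induction l)
  case Nil then show ?case by simp
next
  case (Cons x l)
  then show ?case by (subst length_Cons, subst prod.lessThan_Suc_shift) simp
qed

theorem lemma11:
  fixes \<alpha> :: "nat list" and r q :: "rat list" and \<delta> \<epsilon> :: rat
    and y :: "nat \<Rightarrow> real"
  assumes "is_condition \<alpha> r \<delta>"
    and "y \<in> l2"
    and "nicely_hypercyclic y"
    and "\<epsilon> > 0"
  shows "\<exists>\<beta> s \<eta>. is_condition \<beta> s \<eta> \<and> cond_less \<beta> s \<eta> \<alpha> r \<delta> \<and>
           (\<exists>k \<le> length \<beta>. maps_nicely (plus_ext \<beta>) k y q \<epsilon>)"
proof -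
  note cond = assms(1) and y = assms(2) and hc = assms(3) and eps = assms(4)
  have \<alpha>12: "set \<alpha> \<subseteq> {1,2}" and ra: "length r \<le> length \<alpha>" and \<delta>0: "0 < \<delta>" and \<delta>1: "\<delta> < 1"
    using cond unfolding is_condition_def by auto
  obtain w where w: "w \<in> weights" and H: "\<forall>q \<epsilon>. \<epsilon> > 0 \<longrightarrow> (\<exists>k. maps_nicely w k y q \<epsilon>)"
    using hc unfolding nicely_hypercyclic_def by blast
  have w12: "w j \<in> {1,2}" for j using w unfolding weights_def by blast
  define a where "a = length \<alpha>"
  define m where "m = length q"
  have "\<exists>n K. \<forall>k\<ge>K. a \<le> k \<longrightarrow> n \<le> cnt w 1 k \<and> cnt w 1 k + a \<le> k + n"
    by (rule exists_nK) (rule w12)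
  then obtain n K where nK: "\<And>k. k \<ge> K \<Longrightarrow> a \<le> k \<Longrightarrow> n \<le> cnt w 1 k \<and> cnt w 1 k + a \<le> k + n"
    by blast
  define Kb where "Kb = max K (max a m)"
  define \<tau> where "\<tau> = tailnorm y (Kb + m)"
  have \<tau>0: "\<tau> > 0" unfolding \<tau>_def by (rule tail_pos[OF y hc])
  obtain \<rho> :: rat where \<rho>: "0 < real_of_rat \<rho>" "real_of_rat \<rho> < \<tau>"
    using of_rat_dense[OF \<tau>0] by auto
  define PA where "PA = prod_list \<alpha>"
  have "0 \<notin> set \<alpha>" using \<alpha>12 by auto
  then have PA0: "PA > 0" unfolding PA_def using prod_list_zero_iff[of \<alpha>] by (metis gr0I)
  define S :: rat where "S = of_nat PA * 2^n / 2^a"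
  have S0: "S > 0" unfolding S_def using PA0 by simp
  define \<epsilon>' where "\<epsilon>' = min \<rho> (min \<epsilon> (\<epsilon> / S))"
  have \<epsilon>'0: "\<epsilon>' > 0" unfolding \<epsilon>'_def using \<rho> eps S0 by simp
  have \<epsilon>'\<tau>: "real_of_rat \<epsilon>' < \<tau>"
  proof -
    have "\<epsilon>' \<le> \<rho>" unfolding \<epsilon>'_def by simp
    then have "real_of_rat \<epsilon>' \<le> real_of_rat \<rho>" by (simp add: of_rat_less_eq)
    then show ?thesis using \<rho> by simp
  qed
  have \<epsilon>'\<epsilon>: "\<epsilon>' \<le> \<epsilon>" unfolding \<epsilon>'_def by simp
  have \<epsilon>'S: "\<epsilon>' * S \<le> \<epsilon>"
  proof -
    have "\<epsilon>' \<le> \<epsilon> / S" unfolding \<epsilon>'_def by simp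
    then show ?thesis using S0 by (simp add: field_simps)
  qed
  define q' where "q' = map (\<lambda>t. t / S) q"
  obtain k where hit: "maps_nicely w k y q' \<epsilon>'" using H \<epsilon>'0 by blast
  have lq': "length q' = m" unfolding q'_def m_def by simp
  have hitU: "(Bw w ^^ k) y \<in> basicU q' \<epsilon>'" and wnice: "nice_at w m k"
    and ytail: "tailnorm y (k + m) < real_of_rat \<epsilon>' * 2 powi (- int k)"
    using hit lq' unfolding maps_nicely_def by auto
  have pk: "(2::real) powi (- int k) \<le> 1"
    by (simp add: power_int_minus inverse_le_1_iff)
  have kK: "k > Kb"
  proof (rule ccontr)
    assume "\<not> k > Kb"
    then have "tailnorm y (Kb + m) \<le> tailnorm y (k + m)" by (intro tail_mono[OF y]) simp
    moreover have "real_of_rat \<epsilon>' * 2 powi (- int k) \<le> real_of_rat \<epsilon>'"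
      using pk \<epsilon>'0 by (simp add: mult_left_le)
    ultimately show False using ytail \<epsilon>'\<tau> unfolding \<tau>_def by linarith
  qed
  then have kK': "k \<ge> K" "k \<ge> a" "k \<ge> m" unfolding Kb_def by auto
  have nk: "n \<le> cnt w 1 k" "cnt w 1 k + a \<le> k + n" using nK[OF kK'(1,2)] by auto
  have c12: "cnt w 1 k + cnt w 2 k = k" by (rule cnt12) (rule w12)
  define e where "e = cnt w 2 k + n - a"
  have ea: "e + a = cnt w 2 k + n" unfolding e_def using nk c12 by simp
  have ek: "e \<le> k - a" unfolding e_def using nk c12 by simp
  define \<gamma> where "\<gamma> = \<alpha> @ replicate e 2 @ replicate (k - a - e) 1"
  have l\<gamma>: "length \<gamma> = k" unfolding \<gamma>_def using ek kK' a_def by simp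
  define \<beta> where "\<beta> = \<gamma> @ take m \<gamma>"
  have l\<beta>: "length \<beta> = k + m" unfolding \<beta>_def using l\<gamma> kK' by simp
  have \<gamma>12: "set \<gamma> \<subseteq> {1,2}" unfolding \<gamma>_def using \<alpha>12 by auto
  have \<beta>12: "set \<beta> \<subseteq> {1,2}" unfolding \<beta>_def using \<gamma>12 set_take_subset[of m \<gamma>] by auto
  have pe12: "plus_ext \<beta> j \<in> {1,2}" for j
  proof (cases "j < length \<beta>")
    case True
    then have "\<beta> ! j \<in> set \<beta>" by (rule nth_mem)
    then have "\<beta> ! j \<in> {1,2}" using \<beta>12 by blast
    then show ?thesis using True unfolding plus_ext_def by simp
  qed (simp add: plus_ext_def)
  have pe_lt: "plus_ext \<beta> j = \<gamma> ! j" if "j < k" for j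
  proof -
    have "plus_ext \<beta> j = \<beta> ! j" unfolding plus_ext_def using that l\<beta> by simp
    also have "\<dots> = \<gamma> ! j" unfolding \<beta>_def using that l\<gamma> by (simp add: nth_append)
    finally show ?thesis .
  qed
  have pe_nice: "nice_at (plus_ext \<beta>) m k"
    unfolding nice_at_def
  proof (intro allI impI)
    fix i assume i: "i < m"
    have "plus_ext \<beta> (k + i) = \<beta> ! (k + i)" unfolding plus_ext_def using l\<beta> i by simp
    also have "\<dots> = \<gamma> ! i" unfolding \<beta>_def using l\<gamma> i kK' by (simp add: nth_append)
    finally show "plus_ext \<beta> i = plus_ext \<beta> (k + i)" using pe_lt[of i] i kK' by simp
  qed
  have prod\<beta>: "(\<Prod>j<k. plus_ext \<beta> j) = PA * 2^e"
  proof -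
    have "(\<Prod>j<k. plus_ext \<beta> j) = (\<Prod>j<length \<gamma>. \<gamma> ! j)" using l\<gamma> pe_lt by simp
    also have "\<dots> = prod_list \<gamma>" by (rule prod_list_nth)
    also have "\<dots> = PA * 2^e" unfolding \<gamma>_def PA_def by simp
    finally show ?thesis .
  qed
  have rel: "real (PA * 2^e) = real_of_rat S * 2 ^ cnt w 2 k"
  proof -
    have "real (PA * 2^e) * 2^a = real PA * 2^(e+a)" by (simp add: power_add)
    also have "\<dots> = real PA * 2^n * 2 ^ cnt w 2 k" using ea by (simp add: power_add)
    finally show ?thesis unfolding S_def by (simp add: of_rat_divide of_rat_mult of_rat_power field_simps mult.commute)
  qed
  have pe2: "plus_ext \<beta> j \<le> 2" for j using pe12[of j] by auto
  have w2: "w j \<le> 2" for j using w12[of j] by auto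
  have pepos: "0 < plus_ext \<beta> j" for j using pe12[of j] by auto
  have wpos: "0 < w j" for j using w12[of j] by auto
  have Bb: "(Bw (plus_ext \<beta>) ^^ k) y i = real (PA * 2^e) * y (i + k)" if "i < m" for i
  proof -
    have "(\<Prod>j<k. plus_ext \<beta> (i+j)) = (\<Prod>j<k. plus_ext \<beta> j)"
      by (rule prod_nice[OF pepos pe_nice]) (use that in simp)
    then show ?thesis by (simp add: Bw_pow prod\<beta>)
  qed
  have Bwk: "(Bw w ^^ k) y i = 2 ^ cnt w 2 k * y (i + k)" if "i < m" for i
  proof -
    have "(\<Prod>j<k. w (i+j)) = (\<Prod>j<k. w j)"
      by (rule prod_nice[OF wpos wnice]) (use that in simp)
    then show ?thesis by (simp add: Bw_pow prod_cnt[OF w12])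
  qed
  define Sr where "Sr = real_of_rat S"
  have Sr0: "Sr > 0" unfolding Sr_def using S0 by simp
  have SrE: "Sr * real_of_rat \<epsilon>' \<le> real_of_rat \<epsilon>"
  proof -
    have "real_of_rat (\<epsilon>' * S) \<le> real_of_rat \<epsilon>" using \<epsilon>'S by (simp only: of_rat_less_eq)
    then show ?thesis unfolding Sr_def by (simp add: of_rat_mult mult.commute)
  qed
  have E'E: "real_of_rat \<epsilon>' \<le> real_of_rat \<epsilon>" using \<epsilon>'\<epsilon> by (simp only: of_rat_less_eq)
  have Bl2: "(Bw (plus_ext \<beta>) ^^ k) y \<in> l2" by (rule Bw_l2(1)[OF pe2 y])
  have coords: "\<bar>(Bw (plus_ext \<beta>) ^^ k) y i - real_of_rat (q ! i)\<bar>
      < real_of_rat \<epsilon> / sqrt (real m)" if i: "i < m" for i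
  proof -
    have sm: "sqrt (real m) > 0" using i by simp
    have "\<bar>(Bw w ^^ k) y i - real_of_rat (q' ! i)\<bar> < real_of_rat \<epsilon>' / sqrt (real m)"
      using hitU i lq' unfolding basicU_alt by auto
    moreover have "real_of_rat (q' ! i) = real_of_rat (q ! i) / Sr"
      unfolding q'_def Sr_def using i m_def by (simp add: of_rat_divide)
    ultimately have h: "\<bar>2 ^ cnt w 2 k * y (i + k) - real_of_rat (q ! i) / Sr\<bar> < real_of_rat \<epsilon>' / sqrt (real m)"
      using Bwk[OF i] by simp
    have "(Bw (plus_ext \<beta>) ^^ k) y i - real_of_rat (q ! i)
        = Sr * (2 ^ cnt w 2 k * y (i + k) - real_of_rat (q ! i) / Sr)"
      using Bb[OF i] rel Sr0 unfolding Sr_def by (simp add: field_simps)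
    then have "\<bar>(Bw (plus_ext \<beta>) ^^ k) y i - real_of_rat (q ! i)\<bar>
        = Sr * \<bar>2 ^ cnt w 2 k * y (i + k) - real_of_rat (q ! i) / Sr\<bar>"
      using Sr0 by (simp add: abs_mult)
    also have "\<dots> < Sr * (real_of_rat \<epsilon>' / sqrt (real m))"
      using h Sr0 by (intro mult_strict_left_mono)
    also have "\<dots> \<le> real_of_rat \<epsilon> / sqrt (real m)"
      using SrE sm by (simp add: divide_right_mono)
    finally show ?thesis .
  qed
  have p2k: "(2::real)^k * 2 powi (- int k) = 1" by (simp add: power_int_minus)
  have tailB: "tailnorm ((Bw (plus_ext \<beta>) ^^ k) y) m < real_of_rat \<epsilon>"
  proof -
    have "tailnorm ((Bw (plus_ext \<beta>) ^^ k) y) m \<le> 2^k * tailnorm y (m + k)"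
      by (rule Bw_l2(2)[OF pe2 y])
    also have "\<dots> < 2^k * (real_of_rat \<epsilon>' * 2 powi (- int k))"
      using ytail by (simp add: add.commute)
    also have "\<dots> = real_of_rat \<epsilon>'" using p2k by (simp add: algebra_simps)
    finally show ?thesis using E'E by simp
  qed
  have mn: "maps_nicely (plus_ext \<beta>) k y q \<epsilon>"
    unfolding maps_nicely_def
  proof (intro conjI)
    show "(Bw (plus_ext \<beta>) ^^ k) y \<in> basicU q \<epsilon>"
      unfolding basicU_alt using Bl2 coords tailB unfolding m_def by auto
    show "nice_at (plus_ext \<beta>) (length q) k" using pe_nice unfolding m_def .
    have "real_of_rat \<epsilon>' * 2 powi (- int k) \<le> real_of_rat \<epsilon> * 2 powi (- int k)"
      using E'E by (intro mult_right_mono) auto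
    then show "tailnorm y (k + length q) < real_of_rat \<epsilon> * 2 powi (- int k)"
      using ytail unfolding m_def by linarith
  qed
  define \<eta> :: rat where "\<eta> = min (\<delta>/2) (1 / 2 ^ Suc (length \<beta>))"
  have \<eta>0: "\<eta> > 0" unfolding \<eta>_def using \<delta>0 by simp
  have \<eta>\<delta>: "\<eta> \<le> \<delta>/2" unfolding \<eta>_def by simp
  have \<eta>b: "\<eta> \<le> 1 / 2 ^ Suc (length \<beta>)" unfolding \<eta>_def by simp
  have \<eta>1: "\<eta> < 1" using \<eta>\<delta> \<delta>1 by simp
  have \<eta>p: "\<eta> < 2 powi (- int (length \<beta>))"
  proof -
    have "(1::rat) / 2 ^ Suc (length \<beta>) < 1 / 2 ^ length \<beta>" by (simp add: field_simps)
    moreover have "(2::rat) powi (- int (length \<beta>)) = 1 / 2 ^ length \<beta>"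
      by (simp add: power_int_minus inverse_eq_divide)
    ultimately show ?thesis using \<eta>b by linarith
  qed
  have ic: "is_condition \<beta> r \<eta>"
    unfolding is_condition_def using \<beta>12 ra l\<beta> kK'(2) \<eta>0 \<eta>1 \<eta>p unfolding a_def by simp
  have tk: "take (length \<alpha>) \<beta> = \<alpha>" unfolding \<beta>_def \<gamma>_def by simp
  have ball: "(Bw (plus_ext \<beta>) ^^ k') ` basicU r \<eta> \<subseteq> {z \<in> l2. l2norm z < 1}"
    if "length \<alpha> \<le> k'" "k' < length \<beta>" for k'
  proof
    fix z assume "z \<in> (Bw (plus_ext \<beta>) ^^ k') ` basicU r \<eta>"
    then obtain x where x: "x \<in> basicU r \<eta>" and z: "z = (Bw (plus_ext \<beta>) ^^ k') x" by blast
    have "real_of_rat \<eta> \<le> real_of_rat (1 / 2 ^ Suc (length \<beta>))"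
      using \<eta>b by (simp only: of_rat_less_eq)
    then have "(2::real)^k' * real_of_rat \<eta> \<le> 2^k' * real_of_rat (1 / 2 ^ Suc (length \<beta>))"
      by (rule mult_left_mono) simp
    also have "\<dots> = 2^k' / 2 ^ Suc (length \<beta>)" by (simp add: of_rat_divide of_rat_power of_rat_mult)
    also have "\<dots> \<le> 1"
    proof -
      have "(2::real)^k' \<le> 2 ^ Suc (length \<beta>)" using that by (intro power_increasing) auto
      then show ?thesis by simp
    qed
    finally have sm: "(2::real)^k' * real_of_rat \<eta> \<le> 1" .
    have "length r \<le> k'" using that ra by simp
    from ball_map[OF pe2 x this sm] show "z \<in> {z \<in> l2. l2norm z < 1}" unfolding z .
  qed
  have cl: "cond_less \<beta> r \<eta> \<alpha> r \<delta>"
    unfolding cond_less_def using tk l\<beta> kK'(2) closure_sub[OF \<eta>0 \<eta>\<delta>] ball unfolding a_def by simp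
  show ?thesis using ic cl mn l\<beta> by (intro exI[of _ \<beta>] exI[of _ r] exI[of _ \<eta>]) (auto intro!: exI[of _ k])
qed

end
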